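(* For all integers $n \ge 8$ and $d \ge 6$ with $d \le n-1$, \[ \binom{d-1}{2} + (d-1)\binom{n-d}{2}\,\mathcal{F}_{P_{n-d}} \le \binom{n}{2}\,\mathcal{F}_{P_n}. \]
   Context: $\mathcal{F}_{P_m}$ (for $m\ge1$) is the number of minimal forts of the path on $m$ vertices; equivalently $\mathcal{F}_{P_m}=a_m$ where $a_1=a_2=a_3=1$ and $a_m = a_{m-2}+a_{m-3}$ for $m \ge 4$. (A fort is a nonempty vertex set such that every vertex outside it has zero or at least two neighbors in it; minimal means no proper subset is a fort.) Binomial coefficients $\binom{j}{2}$ with $j<2$ are $0$. *)

theory Defs
  imports Main
begin

definition path_adj :: "nat \<Rightarrow> nat \<Rightarrow> bool" where
  "path_adj i j \<longleftrightarrow> i = Suc j \<or> j = Suc i"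

definition is_fort_path :: "nat \<Rightarrow> nat set \<Rightarrow> bool" where
  "is_fort_path m F \<longleftrightarrow> F \<noteq> {} \<and> F \<subseteq> {0..<m} \<and>
     (\<forall>v \<in> {0..<m} - F. card {u \<in> F. path_adj u v} \<noteq> 1)"

definition is_minimal_fort_path :: "nat \<Rightarrow> nat set \<Rightarrow> bool" where
  "is_minimal_fort_path m F \<longleftrightarrow> is_fort_path m F \<and>
     (\<forall>G. G \<subset> F \<longrightarrow> \<not> is_fort_path m G)"

definition num_min_forts_path :: "nat \<Rightarrow> nat" where
  "num_min_forts_path m = card {F. is_minimal_fort_path m F}"

end

theory Submission
  imports Defs
begin

definition pv :: "nat \<Rightarrow> nat set \<Rightarrow> bool" where
  "pv m F \<longleftrightarrow> F \<subseteq> {0..<m} \<and> 0 \<in> F \<and> m - 1 \<in> F \<and>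
     (\<forall>i. Suc i < m \<longrightarrow> i \<in> F \<or> Suc i \<in> F) \<and>
     (\<forall>i. Suc (Suc i) < m \<longrightarrow> \<not> (i \<in> F \<and> Suc i \<in> F \<and> Suc (Suc i) \<in> F))"

definition fp :: "nat \<Rightarrow> nat set \<Rightarrow> bool" where
  "fp m F \<longleftrightarrow> F \<subseteq> {0..<m} \<and> 0 \<in> F \<and> m - 1 \<in> F \<and>
     (\<forall>i. Suc i < m \<longrightarrow> i \<in> F \<or> Suc i \<in> F)"

lemma nbr_set: "{u \<in> F. path_adj u v} = {u \<in> F. u = v - 1 \<and> v > 0 \<or> u = Suc v}"
  unfolding path_adj_def by auto

lemma fort_nbr: "is_fort_path m F \<Longrightarrow> v < m \<Longrightarrow> v \<notin> F \<Longrightarrow> card {u \<in> F. path_adj u v} \<noteq> 1"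
  by (simp add: is_fort_path_def)

lemma fort_nbr1: "is_fort_path m F \<Longrightarrow> {u \<in> F. path_adj u v} = {w} \<Longrightarrow> v \<in> {0..<m} - F \<Longrightarrow> False"
  using fort_nbr[of m F v] by simp

lemma fort_down:
  assumes f: "is_fort_path m F" and i: "Suc i < m" "i \<notin> F" "Suc i \<notin> F"
  shows "\<forall>j\<le>i. j \<notin> F \<and> Suc j \<notin> F"
proof -
  have step: "j \<notin> F" if "Suc j \<notin> F" "Suc (Suc j) \<notin> F" "Suc (Suc j) < m" for j
  proof
    assume "j \<in> F"
    have "{u \<in> F. path_adj u (Suc j)} = {j}" using that \<open>j \<in> F\<close> unfolding path_adj_def by auto
    moreover have "Suc j \<in> {0..<m} - F" using that by auto
    ultimately show False by (rule fort_nbr1[OF f])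
  qed
  show ?thesis
  proof (intro allI impI)
    fix j assume "j \<le> i"
    then show "j \<notin> F \<and> Suc j \<notin> F"
    proof (induction "i - j" arbitrary: j)
      case 0 then have "j = i" by simp
      then show ?case using i by simp
    next
      case (Suc x)
      then have "Suc j \<le> i" by auto
      moreover have "x = i - Suc j" using Suc.hyps(2) by simp
      ultimately have a: "Suc j \<notin> F \<and> Suc (Suc j) \<notin> F" using Suc.hyps(1) by blast
      have "Suc (Suc j) < m" using \<open>Suc j \<le> i\<close> i(1) by simp
      then have "j \<notin> F" using step[of j] a by blast
      then show ?case using a by blast
    qed
  qed
qed

lemma fort_up:
  assumes f: "is_fort_path m F" and i: "Suc i < m" "i \<notin> F" "Suc i \<notin> F"
  shows "\<forall>j. i \<le> j \<longrightarrow> j \<notin> F"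
proof -
  have stp: "Suc (Suc j) \<notin> F" if "j \<notin> F" "Suc j \<notin> F" for j
  proof
    assume a: "Suc (Suc j) \<in> F"
    then have "Suc (Suc j) < m" using f unfolding is_fort_path_def by auto
    have "{u \<in> F. path_adj u (Suc j)} = {Suc (Suc j)}" using that a unfolding path_adj_def by auto
    moreover have "Suc j \<in> {0..<m} - F" using that \<open>Suc (Suc j) < m\<close> by auto
    ultimately show False by (rule fort_nbr1[OF f])
  qed
  have "j \<notin> F \<and> Suc j \<notin> F" if "i \<le> j" for j
    using that
  proof (induction j rule: dec_induct)
    case base then show ?case using i by auto
  next
    case (step k)
    then have "k \<notin> F" "Suc k \<notin> F" by blast+
    then have "Suc (Suc k) \<notin> F" by (rule stp)
    then show ?case using \<open>Suc k \<notin> F\<close> by blast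
  qed
  then show ?thesis by auto
qed

lemma fort_gap:
  assumes f: "is_fort_path m F" and i: "Suc i < m"
  shows "i \<in> F \<or> Suc i \<in> F"
proof (rule ccontr)
  assume "\<not> ?thesis"
  then have a: "i \<notin> F" "Suc i \<notin> F" by auto
  have "\<forall>j. j \<notin> F"
  proof
    fix j show "j \<notin> F"
    proof (cases "i \<le> j")
      case True then show ?thesis using fort_up[OF f i a] by auto
    next
      case False then show ?thesis using fort_down[OF f i a] by auto
    qed
  qed
  then show False using f unfolding is_fort_path_def by auto
qed

lemma fort_imp_fp:
  assumes f: "is_fort_path m F"
  shows "fp m F"
proof -
  have sub: "F \<subseteq> {0..<m}" and ne: "F \<noteq> {}" using f unfolding is_fort_path_def by auto
  then have m: "m \<ge> 1" by auto
  have g: "\<forall>i. Suc i < m \<longrightarrow> i \<in> F \<or> Suc i \<in> F" using fort_gap[OF f] by auto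
  have z: "0 \<in> F"
  proof (cases "m = 1")
    case True then show ?thesis using sub ne by auto
  next
    case False
    show ?thesis
    proof (rule ccontr)
      assume n: "0 \<notin> F"
      have "Suc 0 < m" using False m by simp
      then have "0 \<in> F \<or> Suc 0 \<in> F" using g by blast
      then have "Suc 0 \<in> F" using n by blast
      then have "{u \<in> F. path_adj u 0} = {Suc 0}" using n unfolding path_adj_def by auto
      moreover have "0 \<in> {0..<m} - F" using n m by auto
      ultimately show False by (rule fort_nbr1[OF f])
    qed
  qed
  have l: "m - 1 \<in> F"
  proof (cases "m = 1")
    case True then show ?thesis using z by auto
  next
    case False
    then have "\<exists>p. m = Suc (Suc p)" using m by presburger
    then obtain p where mp: "m = Suc (Suc p)" by blast
    show ?thesis
    proof (rule ccontr)
      assume n: "m - 1 \<notin> F"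
      then have n': "Suc p \<notin> F" using mp by simp
      have "p \<in> F \<or> Suc p \<in> F" using g mp by blast
      then have pF: "p \<in> F" using n' by blast
      have "Suc (Suc p) \<notin> F" using sub mp by auto
      then have "{u \<in> F. path_adj u (Suc p)} = {p}" using pF n' unfolding path_adj_def by auto
      moreover have "Suc p \<in> {0..<m} - F" using n' mp by auto
      ultimately show False by (rule fort_nbr1[OF f])
    qed
  qed
  show ?thesis unfolding fp_def using sub g z l by auto
qed

lemma fp_imp_fort:
  assumes "fp m F" shows "is_fort_path m F"
proof -
  have sub: "F \<subseteq> {0..<m}" and z: "0 \<in> F" and l: "m - 1 \<in> F"
    and g: "\<forall>i. Suc i < m \<longrightarrow> i \<in> F \<or> Suc i \<in> F" using assms unfolding fp_def by auto
  have "card {u \<in> F. path_adj u v} \<noteq> 1" if v: "v \<in> {0..<m} - F" for v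
  proof -
    have "v \<notin> F" "v < m" using v by auto
    then have "v \<noteq> 0" "v \<noteq> m - 1" using z l by metis+
    then have a: "v - 1 \<in> F" "Suc v \<in> F" using g[rule_format, of "v - 1"] g[rule_format, of v] \<open>v \<notin> F\<close> \<open>v < m\<close> by auto
    have "{u \<in> F. path_adj u v} = {v - 1, Suc v}" using a \<open>v \<noteq> 0\<close> unfolding path_adj_def by auto
    then show ?thesis using \<open>v \<noteq> 0\<close> by auto
  qed
  then show ?thesis unfolding is_fort_path_def using sub z by auto
qed

lemma fort_iff: "is_fort_path m F \<longleftrightarrow> fp m F"
  using fort_imp_fp fp_imp_fort by blast

lemma minfort_iff: "is_minimal_fort_path m F \<longleftrightarrow> pv m F"
proof
  assume a: "is_minimal_fort_path m F"
  then have f: "fp m F" and mn: "\<forall>G. G \<subset> F \<longrightarrow> \<not> fp m G"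
    unfolding is_minimal_fort_path_def fort_iff by auto
  have "\<not> (i \<in> F \<and> Suc i \<in> F \<and> Suc (Suc i) \<in> F)" if "Suc (Suc i) < m" for i
  proof
    assume t: "i \<in> F \<and> Suc i \<in> F \<and> Suc (Suc i) \<in> F"
    let ?G = "F - {Suc i}"
    have "?G \<subset> F" using t by auto
    have gF: "\<forall>k. Suc k < m \<longrightarrow> k \<in> F \<or> Suc k \<in> F" and sF: "F \<subseteq> {0..<m}"
      and zF: "0 \<in> F" and lF: "m - 1 \<in> F" using f unfolding fp_def by auto
    have gG: "\<forall>k. Suc k < m \<longrightarrow> k \<in> ?G \<or> Suc k \<in> ?G"
    proof (intro allI impI)
      fix k assume k: "Suc k < m"
      show "k \<in> ?G \<or> Suc k \<in> ?G"
      proof (cases "k = Suc i")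
        case True then show ?thesis using t by simp
      next
        case False
        show ?thesis
        proof (cases "k = i")
          case True then show ?thesis using t by simp
        next
          case False
          then have "Suc k \<noteq> Suc i" by simp
          then show ?thesis using gF k \<open>k \<noteq> Suc i\<close> by blast
        qed
      qed
    qed
    have "m - 1 \<noteq> Suc i" using that by simp
    then have "fp m ?G" unfolding fp_def using gG sF zF lF by blast
    moreover note \<open>?G \<subset> F\<close>
    ultimately show False using mn by auto
  qed
  then show "pv m F" using f unfolding pv_def fp_def by auto
next
  assume p: "pv m F"
  then have f: "fp m F" unfolding pv_def fp_def by auto
  have "\<not> fp m G" if GF: "G \<subset> F" for G
  proof
    assume g: "fp m G"
    obtain x where x: "x \<in> F" "x \<notin> G" using GF by auto
    have "0 \<in> G" "m - 1 \<in> G" "F \<subseteq> {0..<m}" using g p unfolding fp_def pv_def by auto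
    then have "x \<noteq> 0" "x \<noteq> m - 1" using x by metis+
    have "x < m" using x \<open>F \<subseteq> {0..<m}\<close> by auto
    obtain y where xy: "x = Suc y" using \<open>x \<noteq> 0\<close> not0_implies_Suc by blast
    have gG: "\<forall>k. Suc k < m \<longrightarrow> k \<in> G \<or> Suc k \<in> G" using g unfolding fp_def by blast
    have "Suc x < m" using \<open>x < m\<close> \<open>x \<noteq> m - 1\<close> by simp
    then have "y \<in> G" "Suc x \<in> G" using gG xy x(2) \<open>x < m\<close> by blast+
    then have "y \<in> F" "Suc x \<in> F" using GF by auto
    moreover have "\<forall>i. Suc (Suc i) < m \<longrightarrow> \<not> (i \<in> F \<and> Suc i \<in> F \<and> Suc (Suc i) \<in> F)"
      using p unfolding pv_def by blast
    ultimately show False using x(1) xy \<open>Suc x < m\<close> by blast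
  qed
  then show "is_minimal_fort_path m F" unfolding is_minimal_fort_path_def fort_iff using f by auto
qed


fun pad :: "nat \<Rightarrow> nat" where
  "pad 0 = 0" | "pad (Suc 0) = 1" | "pad (Suc (Suc 0)) = 1"
| "pad (Suc (Suc (Suc m))) = pad (Suc m) + pad m"

lemma pvI:
  assumes "F \<subseteq> {0..<m}" "0 \<in> F" "m - 1 \<in> F"
    "\<And>i. Suc i < m \<Longrightarrow> i \<in> F \<or> Suc i \<in> F"
    "\<And>i. Suc (Suc i) < m \<Longrightarrow> i \<in> F \<Longrightarrow> Suc i \<in> F \<Longrightarrow> Suc (Suc i) \<notin> F"
  shows "pv m F"
  using assms unfolding pv_def by blast

lemma pvD:
  assumes "pv m F"
  shows "F \<subseteq> {0..<m}" "0 \<in> F" "m - 1 \<in> F"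
    "\<And>i. Suc i < m \<Longrightarrow> i \<in> F \<or> Suc i \<in> F"
    "\<And>i. Suc (Suc i) < m \<Longrightarrow> i \<in> F \<Longrightarrow> Suc i \<in> F \<Longrightarrow> Suc (Suc i) \<notin> F"
  using assms unfolding pv_def by blast+

lemma ext1:
  assumes "pv (m + 1) G"
  shows "pv (m + 3) (insert (m + 2) G)"
proof -
  note d = pvD[OF assms]
  show ?thesis
  proof (rule pvI)
    show "insert (m + 2) G \<subseteq> {0..<m + 3}" using d(1) by auto
    show "0 \<in> insert (m + 2) G" using d(2) by blast
    show "m + 3 - 1 \<in> insert (m + 2) G" by simp
  next
    fix i assume i: "Suc i < m + 3"
    show "i \<in> insert (m + 2) G \<or> Suc i \<in> insert (m + 2) G"
    proof (cases "Suc i < m + 1")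
      case True then show ?thesis using d(4)[of i] by blast
    next
      case False
      then have "i = m \<or> i = m + 1" using i by linarith
      moreover have "m \<in> G" using d(3) by simp
      ultimately show ?thesis by auto
    qed
  next
    fix i assume i: "Suc (Suc i) < m + 3" "i \<in> insert (m + 2) G" "Suc i \<in> insert (m + 2) G"
    have nm: "m + 1 \<notin> G" using d(1) by auto
    show "Suc (Suc i) \<notin> insert (m + 2) G"
    proof (cases "Suc (Suc i) < m + 1")
      case True
      then have "i \<in> G" "Suc i \<in> G" using i by auto
      then show ?thesis using d(5)[of i] True by auto
    next
      case False
      then have "Suc (Suc i) = m + 1 \<or> Suc (Suc i) = m + 2" using i(1) by linarith
      then show ?thesis using i nm by auto
    qed
  qed
qed

lemma ext2:
  assumes "pv m G" "m \<ge> 1"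
  shows "pv (m + 3) (insert (m + 1) (insert (m + 2) G))"
proof -
  note d = pvD[OF assms(1)]
  have nm: "m \<notin> G" using d(1) by auto
  show ?thesis
  proof (rule pvI)
    show "insert (m + 1) (insert (m + 2) G) \<subseteq> {0..<m + 3}" using d(1) by auto
    show "0 \<in> insert (m + 1) (insert (m + 2) G)" using d(2) by blast
    show "m + 3 - 1 \<in> insert (m + 1) (insert (m + 2) G)" by simp
  next
    fix i assume i: "Suc i < m + 3"
    show "i \<in> insert (m + 1) (insert (m + 2) G) \<or> Suc i \<in> insert (m + 1) (insert (m + 2) G)"
    proof (cases "Suc i < m")
      case True then show ?thesis using d(4)[of i] by blast
    next
      case False
      then have "i = m - 1 \<or> i = m \<or> i = m + 1" using i assms(2) by linarith
      moreover have "m - 1 \<in> G" using d(3) by simp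
      ultimately show ?thesis by auto
    qed
  next
    fix i assume i: "Suc (Suc i) < m + 3" "i \<in> insert (m + 1) (insert (m + 2) G)"
      "Suc i \<in> insert (m + 1) (insert (m + 2) G)"
    show "Suc (Suc i) \<notin> insert (m + 1) (insert (m + 2) G)"
    proof (cases "Suc (Suc i) < m")
      case True
      then have "i \<in> G" "Suc i \<in> G" using i by auto
      then show ?thesis using d(5)[of i] True by auto
    next
      case False
      then have "Suc (Suc i) = m \<or> Suc i = m \<or> i = m" using i(1) by linarith
      then show ?thesis using i nm by auto
    qed
  qed
qed

lemma split_pv:
  assumes "pv (m + 3) F" "m \<ge> 1"
  shows "(m + 1 \<notin> F \<and> pv (m + 1) (F - {m + 2}) \<and> F = insert (m + 2) (F - {m + 2})) \<or>
         (m + 1 \<in> F \<and> pv m (F - {m + 1, m + 2}) \<and> F = insert (m + 1) (insert (m + 2) (F - {m + 1, m + 2})))"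
proof -
  note d = pvD[OF assms(1)]
  have top: "m + 2 \<in> F" using d(3) by simp
  show ?thesis
  proof (cases "m + 1 \<in> F")
    case False
    have mF: "m \<in> F" using d(4)[of m] False by simp
    let ?G = "F - {m + 2}"
    have "pv (m + 1) ?G"
    proof (rule pvI)
      show "?G \<subseteq> {0..<m + 1}"
      proof
        fix x assume "x \<in> ?G"
        then have "x \<in> F" "x \<noteq> m + 2" by auto
        then have "x < m + 3" "x \<noteq> m + 1" using d(1) False by auto
        then show "x \<in> {0..<m + 1}" using \<open>x \<noteq> m + 2\<close> by simp
      qed
      show "0 \<in> ?G" using d(2) by simp
      show "m + 1 - 1 \<in> ?G" using mF by simp
    next
      fix i assume "Suc i < m + 1"
      then show "i \<in> ?G \<or> Suc i \<in> ?G" using d(4)[of i] by auto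
    next
      fix i assume "Suc (Suc i) < m + 1" "i \<in> ?G" "Suc i \<in> ?G"
      then show "Suc (Suc i) \<notin> ?G" using d(5)[of i] by auto
    qed
    then show ?thesis using False top by auto
  next
    case True
    have nm: "m \<notin> F" using d(5)[of m] True top by auto
    have m1: "m - 1 \<in> F" using d(4)[of "m - 1"] nm assms(2) by simp
    let ?G = "F - {m + 1, m + 2}"
    have "pv m ?G"
    proof (rule pvI)
      show "?G \<subseteq> {0..<m}"
      proof
        fix x assume "x \<in> ?G"
        then have "x \<in> F" "x \<noteq> m + 2" "x \<noteq> m + 1" by auto
        then have "x < m + 3" "x \<noteq> m" using d(1) nm by auto
        then show "x \<in> {0..<m}" using \<open>x \<noteq> m + 2\<close> \<open>x \<noteq> m + 1\<close> by simp
      qed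
      show "0 \<in> ?G" using d(2) by simp
      have "m - 1 \<noteq> m + 1" "m - 1 \<noteq> m + 2" by arith+
      then show "m - 1 \<in> ?G" using m1 by simp
    next
      fix i assume "Suc i < m"
      then show "i \<in> ?G \<or> Suc i \<in> ?G" using d(4)[of i] by auto
    next
      fix i assume "Suc (Suc i) < m" "i \<in> ?G" "Suc i \<in> ?G"
      then show "Suc (Suc i) \<notin> ?G" using d(5)[of i] by auto
    qed
    then show ?thesis using True top by auto
  qed
qed

lemma pv_rec:
  assumes "m \<ge> 1"
  shows "{F. pv (m + 3) F} = (insert (m + 2)) ` {G. pv (m + 1) G}
           \<union> (\<lambda>G. insert (m + 1) (insert (m + 2) G)) ` {G. pv m G}" (is "?L = ?R")
proof
  show "?L \<subseteq> ?R"
  proof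
    fix F assume "F \<in> {F. pv (m + 3) F}"
    then have "pv (m + 3) F" by simp
    from split_pv[OF this assms] show "F \<in> (insert (m + 2)) ` {G. pv (m + 1) G}
           \<union> (\<lambda>G. insert (m + 1) (insert (m + 2) G)) ` {G. pv m G}"
    proof
      assume a: "m + 1 \<notin> F \<and> pv (m + 1) (F - {m + 2}) \<and> F = insert (m + 2) (F - {m + 2})"
      then have "F \<in> (insert (m + 2)) ` {G. pv (m + 1) G}" by (metis (mono_tags, lifting) image_eqI mem_Collect_eq)
      then show ?thesis by blast
    next
      assume a: "m + 1 \<in> F \<and> pv m (F - {m + 1, m + 2}) \<and> F = insert (m + 1) (insert (m + 2) (F - {m + 1, m + 2}))"
      then have "F \<in> (\<lambda>G. insert (m + 1) (insert (m + 2) G)) ` {G. pv m G}"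
        by (metis (mono_tags, lifting) image_eqI mem_Collect_eq)
      then show ?thesis by blast
    qed
  qed
next
  show "?R \<subseteq> ?L" using ext1 ext2[OF _ assms] by blast
qed

lemma pv_fin: "finite {F. pv m F}"
proof -
  have "{F. pv m F} \<subseteq> Pow {0..<m}" unfolding pv_def by auto
  then show ?thesis by (rule finite_subset) simp
qed

lemma pv_card_rec:
  assumes "m \<ge> 1"
  shows "card {F. pv (m + 3) F} = card {G. pv (m + 1) G} + card {G. pv m G}"
proof -
  have i1: "inj_on (insert (m + 2)) {G. pv (m + 1) G}"
  proof (rule inj_onI)
    fix x y assume "x \<in> {G. pv (m + 1) G}" "y \<in> {G. pv (m + 1) G}" "insert (m + 2) x = insert (m + 2) y"
    moreover have "m + 2 \<notin> x" "m + 2 \<notin> y" using calculation(1,2) unfolding pv_def by auto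
    ultimately show "x = y" by (metis insert_ident)
  qed
  have i2: "inj_on (\<lambda>G. insert (m + 1) (insert (m + 2) G)) {G. pv m G}"
  proof (rule inj_onI)
    fix x y assume "x \<in> {G. pv m G}" "y \<in> {G. pv m G}"
      "insert (m + 1) (insert (m + 2) x) = insert (m + 1) (insert (m + 2) y)"
    moreover have "x \<subseteq> {0..<m}" "y \<subseteq> {0..<m}" using calculation(1,2) unfolding pv_def by auto
    moreover have "x = insert (m + 1) (insert (m + 2) x) - {m + 1, m + 2}" using calculation(4) by auto
    moreover have "y = insert (m + 1) (insert (m + 2) y) - {m + 1, m + 2}" using calculation(5) by auto
    ultimately show "x = y" by metis
  qed
  have disj: "(insert (m + 2)) ` {G. pv (m + 1) G} \<inter> (\<lambda>G. insert (m + 1) (insert (m + 2) G)) ` {G. pv m G} = {}"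
  proof -
    have "m + 1 \<notin> A" if "A \<in> (insert (m + 2)) ` {G. pv (m + 1) G}" for A
      using that pvD(1) by fastforce
    moreover have "m + 1 \<in> B" if "B \<in> (\<lambda>G. insert (m + 1) (insert (m + 2) G)) ` {G. pv m G}" for B
      using that by blast
    ultimately show ?thesis by blast
  qed
  show ?thesis unfolding pv_rec[OF assms]
    by (subst card_Un_disjoint[OF finite_imageI[OF pv_fin] finite_imageI[OF pv_fin] disj])
       (simp only: card_image[OF i1] card_image[OF i2])
qed

lemma pv1: "{F. pv (Suc 0) F} = {{0}}" unfolding pv_def by auto
lemma pv2: "{F. pv (Suc (Suc 0)) F} = {{0, 1}}" unfolding pv_def by auto
lemma pv3: "{F. pv (Suc (Suc (Suc 0))) F} = {{0, 2}}"
proof -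
  have "pv 3 F \<longleftrightarrow> F = {0, 2}" for F
  proof
    assume "pv 3 F"
    note d = pvD[OF this]
    have "1 \<notin> F" using d(5)[of 0] d(2) d(3) by (auto simp: numeral_2_eq_2)
    have "{0..<3::nat} = {0, 1, 2}" by auto
    then have "F \<subseteq> {0, 1, 2}" using d(1) by simp
    then show "F = {0, 2}" using \<open>1 \<notin> F\<close> d(2) d(3) by (auto simp: numeral_2_eq_2)
  next
    assume "F = {0, 2}"
    then show "pv 3 F" unfolding pv_def by (auto simp: numeral_2_eq_2)
  qed
  then show ?thesis by (auto simp: numeral_3_eq_3)
qed

lemma card_pv: "m \<ge> 1 \<Longrightarrow> card {F. pv m F} = pad m"
proof (induction m rule: pad.induct)
  case 1 then show ?case by simp
next
  case 2 then show ?case by (simp add: pv1)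
next
  case 3 then show ?case by (simp add: pv2)
next
  case (4 k)
  show ?case
  proof (cases k)
    case 0 then show ?thesis by (simp add: pv3)
  next
    case (Suc j)
    have k: "k \<ge> 1" using Suc by simp
    have e: "card {F. pv (Suc (Suc (Suc k))) F} = card {G. pv (Suc k) G} + card {G. pv k G}"
      using pv_card_rec[OF k] by (simp add: numeral_3_eq_3)
    show ?thesis using e 4 k by simp
  qed
qed

lemma num_pad: "m \<ge> 1 \<Longrightarrow> num_min_forts_path m = pad m"
  unfolding num_min_forts_path_def minfort_iff by (rule card_pv)


lemma two_choose: "2 * (n choose 2) = n * (n - 1)"
proof -
  have "even (n * (n - 1))" by (cases "even n") auto
  then show ?thesis by (simp add: choose_two)
qed

lemma pad_step: "pad m \<le> pad (Suc m)"
proof (induction m rule: less_induct)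
  case (less m)
  show ?case
  proof (cases m)
    case 0 then show ?thesis by simp
  next
    case (Suc j) note j = this
    show ?thesis
    proof (cases j)
      case 0 then show ?thesis using j by simp
    next
      case (Suc i) note i = this
      show ?thesis
      proof (cases i)
        case 0 then show ?thesis using j i by (simp add: numeral_eq_Suc)
      next
        case (Suc h)
        have "pad h \<le> pad (Suc h)" using less Suc i j by simp
        moreover have "pad (Suc h) \<le> pad (Suc (Suc h))" using less Suc i j by simp
        ultimately show ?thesis using Suc i j by simp
      qed
    qed
  qed
qed

lemma pad_mono: "a \<le> b \<Longrightarrow> pad a \<le> pad b"
  using pad_step by (rule lift_Suc_mono_le)

lemma pad_pos: "m \<ge> 1 \<Longrightarrow> pad m \<ge> 1"
  using pad_mono[of 1 m] by simp

lemma pad_ratio: "m \<ge> 12 \<Longrightarrow> 21 * pad m \<le> 16 * pad (Suc m)"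
proof (induction m rule: less_induct)
  case (less m)
  show ?case
  proof (cases "m \<le> 14")
    case True
    then have "m = 12 \<or> m = 13 \<or> m = 14" using less.prems by linarith
    then show ?thesis by (auto simp: numeral_eq_Suc)
  next
    case False
    then have "\<exists>h. m = Suc (Suc (Suc h)) \<and> h \<ge> 12" using less.prems by presburger
    then obtain h where h: "m = Suc (Suc (Suc h))" "h \<ge> 12" by blast
    have a: "21 * pad h \<le> 16 * pad (Suc h)" using less h by simp
    have b: "21 * pad (Suc h) \<le> 16 * pad (Suc (Suc h))" using less h by simp
    show ?thesis using a b h(1) by simp
  qed
qed

lemma pad_pow: "m \<ge> 12 \<Longrightarrow> 21 ^ d * pad m \<le> 16 ^ d * pad (m + d)"
proof (induction d)
  case 0 then show ?case by simp
next
  case (Suc d)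
  have "21 ^ Suc d * pad m = 21 * (21 ^ d * pad m)" by simp
  also have "\<dots> \<le> 21 * (16 ^ d * pad (m + d))" using Suc by simp
  also have "\<dots> = 16 ^ d * (21 * pad (m + d))" by simp
  also have "\<dots> \<le> 16 ^ d * (16 * pad (Suc (m + d)))"
    using pad_ratio[of "m + d"] Suc.prems by simp
  also have "\<dots> = 16 ^ Suc d * pad (m + Suc d)" by simp
  finally show ?case .
qed

lemma pow_lin: "d \<ge> 6 \<Longrightarrow> (d - 1) * 16 ^ d \<le> (21::nat) ^ d"
proof (induction d rule: dec_induct)
  case base then show ?case by simp
next
  case (step d)
  have "(Suc d - 1) * 16 ^ Suc d = 16 * d * 16 ^ d" by simp
  also have "\<dots> \<le> 21 * (d - 1) * 16 ^ d"
  proof -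
    have "16 * d \<le> 21 * (d - 1)" using step.hyps by simp
    then show ?thesis by (simp add: mult_right_mono)
  qed
  also have "\<dots> \<le> 21 * 21 ^ d" using step.IH by simp
  finally show ?case by simp
qed

lemma big_k: "k \<ge> 12 \<Longrightarrow> d \<ge> 6 \<Longrightarrow> (d - 1) * pad k \<le> pad (k + d)"
proof -
  assume k: "k \<ge> 12" and d: "d \<ge> 6"
  have "16 ^ d * ((d - 1) * pad k) = ((d - 1) * 16 ^ d) * pad k" by simp
  also have "\<dots> \<le> 21 ^ d * pad k" using pow_lin[OF d] by (simp add: mult_right_mono)
  also have "\<dots> \<le> 16 ^ d * pad (k + d)" using pad_pow[OF k] by simp
  finally show ?thesis by simp
qed

lemma small_k: "k < 12 \<Longrightarrow> (k choose 2) * pad k \<le> k * pad (k + 6)"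
proof -
  assume "k < 12"
  then have "k = 0 \<or> k = 1 \<or> k = 2 \<or> k = 3 \<or> k = 4 \<or> k = 5 \<or> k = 6 \<or> k = 7 \<or> k = 8 \<or> k = 9 \<or> k = 10 \<or> k = 11" by presburger
  then show ?thesis by (elim disjE; simp add: numeral_eq_Suc choose_two)
qed


lemma ineq1: "(e + 1) * e + (j + 1) * (j::nat) \<le> (j + e + 3) * (j + e + 2)"
proof -
  have "(j + e + 3) * (j + e + 2) = (e + 1) * e + (j + 1) * j + (2 * j * e + 4 * j + 4 * e + 6)"
    by (simp add: algebra_simps)
  then show ?thesis by simp
qed

lemma ineq2: "(e + 1) * e + 2 * (e + 1) * (j + 1) \<le> (j + e + 3) * (j + e + 2::nat)"
proof -
  have "(j + e + 3) * (j + e + 2) = (e + 1) * e + 2 * (e + 1) * (j + 1) + (j * j + 3 * j + 2 * e + 4)"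
    by (simp add: algebra_simps)
  then show ?thesis by simp
qed

theorem mainTheorem19:
  fixes n d :: nat
  assumes "n \<ge> 8" and "d \<ge> 6" and "d \<le> n - 1"
  shows "(d - 1 choose 2) + (d - 1) * (n - d choose 2) * num_min_forts_path (n - d)
           \<le> (n choose 2) * num_min_forts_path n"
proof -
  define k where "k = n - d"
  have k1: "k \<ge> 1" and nk: "n = k + d" using assms unfolding k_def by auto
  have "\<exists>e. d = e + 2" using assms(2) by presburger
  then obtain e where e: "d = e + 2" by blast
  have "\<exists>j. k = j + 1" using k1 by presburger
  then obtain j where j: "k = j + 1" by blast
  have fk: "num_min_forts_path (n - d) = pad k" using num_pad k1 unfolding k_def by simp
  have fn: "num_min_forts_path n = pad n" using num_pad assms(1) by simp
  have P: "pad n \<ge> 1" using pad_pos assms(1) by simp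
  have A2: "2 * (d - 1 choose 2) = (e + 1) * e" using two_choose[of "d - 1"] e by simp
  have B2: "2 * (k choose 2) = (j + 1) * j" using two_choose[of k] j by simp
  have n3: "n = j + e + 3" using nk e j by simp
  have n1: "n - 1 = j + e + 2" using n3 by simp
  have "2 * (n choose 2) = n * (n - 1)" by (rule two_choose)
  also have "\<dots> = (j + e + 3) * (j + e + 2)" unfolding n1 by (simp only: n3)
  finally have N2: "2 * (n choose 2) = (j + e + 3) * (j + e + 2)" .
  let ?A = "d - 1 choose 2" and ?B = "k choose 2" and ?N = "n choose 2"
  have AP: "?A \<le> ?A * pad n" using P by simp
  have main: "?A + (d - 1) * ?B * pad k \<le> ?N * pad n"
  proof (cases "k \<ge> 12")
    case True
    have "(d - 1) * ?B * pad k = ?B * ((d - 1) * pad k)" by simp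
    also have "\<dots> \<le> ?B * pad n" using big_k[OF True assms(2)] nk by simp
    finally have 1: "(d - 1) * ?B * pad k \<le> ?B * pad n" .
    have "2 * (?A + ?B) \<le> 2 * ?N" using ineq1[of e j] A2 B2 N2 by simp
    then have "?A + ?B \<le> ?N" by simp
    then have "(?A + ?B) * pad n \<le> ?N * pad n" by (rule mult_right_mono) simp
    moreover have "(?A + ?B) * pad n = ?A * pad n + ?B * pad n" by (rule add_mult_distrib)
    ultimately show ?thesis using 1 AP by linarith
  next
    case False
    have "(d - 1) * ?B * pad k = (d - 1) * (?B * pad k)" by simp
    also have "\<dots> \<le> (d - 1) * (k * pad (k + 6))" using small_k[of k] False by simp
    also have "\<dots> \<le> (d - 1) * (k * pad n)" using pad_mono[of "k + 6" n] nk assms(2) by simp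
    finally have 1: "(d - 1) * ?B * pad k \<le> ((d - 1) * k) * pad n" by simp
    have "2 * (?A + (d - 1) * k) \<le> 2 * ?N" using ineq2[of e j] A2 N2 e j by (simp add: algebra_simps)
    then have "?A + (d - 1) * k \<le> ?N" by simp
    then have "(?A + (d - 1) * k) * pad n \<le> ?N * pad n" by (rule mult_right_mono) simp
    moreover have "(?A + (d - 1) * k) * pad n = ?A * pad n + ((d - 1) * k) * pad n" by (rule add_mult_distrib)
    ultimately show ?thesis using 1 AP by linarith
  qed
  have fk': "num_min_forts_path k = pad k" using fk k_def by simp
  show ?thesis unfolding k_def[symmetric] fn fk' by (rule main)
qed

end
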